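(* Let $(\Phi_i)_{i\in\mathbb{Z}}$ be a family of reduced indefinite binary quadratic forms over $\mathbb{Q}((1/T))$ of the same discriminant $D$, written $\Phi_i=((-1)^iA_i,\,B_i,\,(-1)^{i+1}A_{i+1})$, such that for every $i$ the form $\Phi_{i+1}$ is obtained from $\Phi_i$ by a transformation $\begin{pmatrix}0&1\\-1&\delta_i\end{pmatrix}$ with $\delta_i\in\mathbb{Q}[T]$. Let $Q$ be a binary quadratic form properly equivalent to $\Phi_0$. Then $$m(Q)=\inf_{i\in\mathbb{Z}}\deg A_i.$$
   Context: $\mathbb{Q}((1/T))$ is the field of formal Laurent series in $1/T$ over $\mathbb{Q}$; $\deg$ of a nonzero series is the exponent of its leading term, $\deg0=-\infty$. A binary quadratic form $(A,B,C)$ is $AX^2+BXY+CY^2$ with $A,B,C\in\mathbb{Q}((1/T))$ not all in $\mathbb{Q}(T)$, discriminant $D=B^2-4AC$; indefinite means $D\ne0$ is a square in $\mathbb{Q}((1/T))$; a square root $\sqrt D$ is fixed for the discriminant $D$. If $A\ne0$, first root $f=\frac{\sqrt D-B}{2A}$, second root $s=\frac{-\sqrt D-B}{2A}$. Reduced means $A\ne0$, $f\ne0$, $\deg f<0<\deg s$. A matrix $\begin{pmatrix}\alpha&\beta\\\gamma&\delta\end{pmatrix}$ over $\mathbb{Q}[T]$ transforms $q(x,y)$ into $q(\alpha X+\beta Y,\gamma X+\delta Y)$; two forms are properly equivalent if one is transformed into the other by such a matrix of determinant $1$. $m(Q)=\inf\{\deg Q(X,Y):X,Y\in\mathbb{Q}[T],\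 (X,Y)\ne(0,0)\}$. *)

theory Defs
  imports "HOL-Computational_Algebra.Formal_Laurent_Series" "HOL-Computational_Algebra.Polynomial"
    "HOL-Library.Extended_Real"
begin

text \<open>Q((1/T)) is modelled as rat fls (formal Laurent series in X = 1/T, finitely many
  negative powers of X).  A polynomial p(T) in Q[T] is embedded as p(1/X).\<close>

definition emb :: "rat poly \<Rightarrow> rat fls" where
  "emb p = (\<Sum>k\<le>degree p. fls_const (coeff p k) * fls_X_inv ^ k)"

text \<open>Degree in T: the exponent of the leading term, i.e. minus the X-subdegree.\<close>
definition deg :: "rat fls \<Rightarrow> ereal" where
  "deg f = (if f = 0 then -\<infinity> else ereal (of_int (- fls_subdegree f)))"

definition in_QT :: "rat fls \<Rightarrow> bool" where
  "in_QT f \<longleftrightarrow> (\<exists>p q. q \<noteq> 0 \<and> f * emb q = emb p)"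

type_synonym form = "rat fls \<times> rat fls \<times> rat fls"

definition is_bqf :: "form \<Rightarrow> bool" where
  "is_bqf F = (case F of (A,B,C) \<Rightarrow> \<not> (in_QT A \<and> in_QT B \<and> in_QT C))"

definition disc :: "form \<Rightarrow> rat fls" where
  "disc F = (case F of (A,B,C) \<Rightarrow> B^2 - 4*A*C)"

definition evalf :: "form \<Rightarrow> rat fls \<Rightarrow> rat fls \<Rightarrow> rat fls" where
  "evalf F x y = (case F of (A,B,C) \<Rightarrow> A*x^2 + B*x*y + C*y^2)"

definition first_root :: "rat fls \<Rightarrow> form \<Rightarrow> rat fls" where
  "first_root sq F = (case F of (A,B,C) \<Rightarrow> (sq - B) / (2*A))"

definition second_root :: "rat fls \<Rightarrow> form \<Rightarrow> rat fls" where
  "second_root sq F = (case F of (A,B,C) \<Rightarrow> (- sq - B) / (2*A))"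

definition reduced :: "rat fls \<Rightarrow> form \<Rightarrow> bool" where
  "reduced sq F \<longleftrightarrow> fst F \<noteq> 0 \<and> first_root sq F \<noteq> 0 \<and>
     deg (first_root sq F) < 0 \<and> 0 < deg (second_root sq F)"

text \<open>Transformation of (A,B,C) by the matrix ((a,b),(c,d)) over Q[T]:
  q(x,y) becomes q(a x + b y, c x + d y).\<close>
definition transform :: "form \<Rightarrow> rat poly \<Rightarrow> rat poly \<Rightarrow> rat poly \<Rightarrow> rat poly \<Rightarrow> form" where
  "transform F a b c d = (case F of (A,B,C) \<Rightarrow>
     (A*(emb a)^2 + B*emb a*emb c + C*(emb c)^2,
      2*A*emb a*emb b + B*(emb a*emb d + emb b*emb c) + 2*C*emb c*emb d,
      A*(emb b)^2 + B*emb b*emb d + C*(emb d)^2))"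

definition properly_equiv :: "form \<Rightarrow> form \<Rightarrow> bool" where
  "properly_equiv F G \<longleftrightarrow> (\<exists>a b c d. a*d - b*c = 1 \<and> transform F a b c d = G)"

definition m_min :: "form \<Rightarrow> ereal" where
  "m_min F = (INF xy \<in> {(x,y). (x,y) \<noteq> ((0::rat poly),(0::rat poly))}.
                 deg (evalf F (emb (fst xy)) (emb (snd xy))))"

end

theory Submission
  imports Defs
begin


lemma emb_poly: "emb p = poly (map_poly fls_const p) fls_X_inv"
proof -
  have d: "degree (map_poly fls_const p) = degree p"
    by (rule degree_map_poly) simp
  show ?thesis unfolding emb_def poly_altdef d
    by (simp add: coeff_map_poly)
qed

lemma emb_0 [simp]: "emb 0 = 0" by (simp add: emb_poly)

lemma emb_pCons: "emb (pCons a p) = fls_const a + fls_X_inv * emb p"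
  by (simp add: emb_poly map_poly_pCons)

lemma emb_const [simp]: "emb [:c:] = fls_const c"
  by (simp add: emb_pCons)

lemma emb_1 [simp]: "emb 1 = 1"
  by (simp add: one_pCons emb_pCons)

lemma emb_add [simp]: "emb (p + q) = emb p + emb q"
  by (induction p q rule: poly_induct2) (simp_all add: emb_pCons fls_plus_const algebra_simps)

lemma emb_smult: "emb (smult c p) = fls_const c * emb p"
  by (induction p) (simp_all add: emb_pCons algebra_simps)

lemma emb_mult [simp]: "emb (p * q) = emb p * emb q"
  by (induction p) (simp_all add: emb_pCons emb_smult algebra_simps)

lemma emb_uminus [simp]: "emb (- p) = - emb p"
proof -
  have "emb p + emb (-p) = 0" by (metis emb_add emb_0 add.right_inverse)
  then show ?thesis by (simp add: eq_neg_iff_add_eq_0 add.commute)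
qed

lemma emb_diff [simp]: "emb (p - q) = emb p - emb q"
  using emb_add[of p "-q"] by simp

lemma emb_nth: "fls_nth (emb p) k = (if k \<le> 0 then coeff p (nat (-k)) else 0)"
proof (induction p arbitrary: k)
  case 0 then show ?case by simp
next
  case (pCons a p)
  have "fls_nth (emb (pCons a p)) k = (if k = 0 then a else 0) + fls_nth (emb p) (k+1)"
    by (simp add: emb_pCons fls_X_inv_times_conv_shift)
  also have "\<dots> = (if k \<le> 0 then coeff (pCons a p) (nat (-k)) else 0)"
  proof (cases "k < 0")
    case True
    then have "nat (-k) = Suc (nat (-(k+1)))" by simp
    then show ?thesis using True pCons by (simp add: coeff_pCons)
  qed (auto simp: pCons)
  finally show ?case .
qed

lemma emb_eq_0_iff [simp]: "emb p = 0 \<longleftrightarrow> p = 0"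
proof
  assume "emb p = 0"
  then have "\<And>n. coeff p n = 0" using emb_nth[of p "- int n" for n] by (metis fls_zero_nth nat_int neg_0_le_iff_le of_nat_0_le_iff verit_minus_simplify(4))
  then show "p = 0" by (simp add: poly_eq_iff)
qed simp

lemma emb_subdegree: "p \<noteq> 0 \<Longrightarrow> fls_subdegree (emb p) = - int (degree p)"
  by (rule fls_subdegree_eqI) (auto simp: emb_nth coeff_eq_0)


lemma deg_0 [simp]: "deg 0 = -\<infinity>" by (simp add: deg_def)
lemma deg_nz: "f \<noteq> 0 \<Longrightarrow> deg f = ereal (of_int (- fls_subdegree f))" by (simp add: deg_def)
lemma deg_eq_minf_iff [simp]: "deg f = -\<infinity> \<longleftrightarrow> f = 0" by (simp add: deg_def)
lemma deg_not_inf [simp]: "deg f \<noteq> \<infinity>" by (simp add: deg_def)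

lemma deg_mult [simp]: "deg (f * g) = deg f + deg g"
  by (cases "f = 0"; cases "g = 0") (simp_all add: deg_def)

lemma deg_uminus [simp]: "deg (- f) = deg f"
  by (simp add: deg_def)

lemma deg_inverse: "deg (inverse f) = - deg f" if "f \<noteq> 0"
  using that by (simp add: deg_def)

lemma deg_divide: "g \<noteq> 0 \<Longrightarrow> deg (f / g) = deg f - deg g"
  by (cases "f = 0") (simp_all add: deg_def divide_inverse)

lemma deg_add_le: "deg (f + g) \<le> max (deg f) (deg g)"
proof (cases "f = 0 \<or> g = 0 \<or> f + g = 0")
  case True then show ?thesis by (auto simp: max_def)
next
  case False
  then have "fls_subdegree (f+g) \<ge> min (fls_subdegree f) (fls_subdegree g)"
    by (intro fls_plus_subdegree) auto
  with False show ?thesis by (auto simp: deg_def max_def min_def split: if_splits)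
qed

lemma deg_add_eq1: "deg g < deg f \<Longrightarrow> deg (f + g) = deg f"
proof (cases "g = 0")
  case False
  assume "deg g < deg f"
  with False have "f \<noteq> 0" "fls_subdegree f < fls_subdegree g" by (auto simp: deg_def split: if_splits)
  moreover have "f + g \<noteq> 0"
    by (metis calculation add.right_neutral fls_eq0_below_subdegree fls_plus_nth fls_zero_nth nth_fls_subdegree_nonzero)
  ultimately show ?thesis by (simp add: fls_subdegree_add_eq1 deg_def)
qed simp

lemma deg_add_eq2: "deg f < deg g \<Longrightarrow> deg (f + g) = deg g"
  using deg_add_eq1[of f g] by (simp add: add.commute)

lemma deg_diff_eq1: "deg g < deg f \<Longrightarrow> deg (f - g) = deg f"
  using deg_add_eq1[of "-g" f] by simp

lemma deg_diff_eq2: "deg f < deg g \<Longrightarrow> deg (f - g) = deg g"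
  using deg_add_eq2[of f "-g"] by simp

lemma deg_diff_le: "deg (f - g) \<le> max (deg f) (deg g)"
  using deg_add_le[of f "-g"] by simp

lemma deg_emb: "deg (emb p) = (if p = 0 then -\<infinity> else ereal (real (degree p)))"
  by (simp add: deg_def emb_subdegree)

lemma deg_emb_ge0: "p \<noteq> 0 \<Longrightarrow> 0 \<le> deg (emb p)"
  by (simp add: deg_emb)

lemma deg_emb_neg: "deg (emb p) < 0 \<Longrightarrow> p = 0"
  by (simp add: deg_emb split: if_splits)

lemma deg_numeral [simp]: "deg (numeral n) = 0" by (simp add: deg_def)
lemma deg_one [simp]: "deg 1 = 0" by (simp add: deg_def)
lemma deg_neg1_pow [simp]: "deg ((-1) ^ n * f) = deg f"
  by (cases "even n") simp_all


lemma evalf_transform: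
  "evalf (transform F a b c d) x y = evalf F (emb a * x + emb b * y) (emb c * x + emb d * y)"
  by (cases F) (simp add: evalf_def transform_def power2_eq_square algebra_simps)

definition vals :: "form \<Rightarrow> rat fls set" where
  "vals F = {evalf F (emb x) (emb y) | x y. (x, y) \<noteq> (0, 0)}"

lemma m_min_vals: "m_min F = Inf (deg ` vals F)"
proof -
  have "vals F = (\<lambda>xy. evalf F (emb (fst xy)) (emb (snd xy))) ` {(x,y). (x,y) \<noteq> ((0::rat poly),(0::rat poly))}"
    by (auto simp: vals_def image_def)
  then show ?thesis unfolding m_min_def by (simp add: image_image)
qed

lemma vals_transform:
  assumes det: "a*d - b*c = 1"
  shows "vals (transform F a b c d) = vals F"
proof
  show "vals (transform F a b c d) \<subseteq> vals F"
  proof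
    fix v assume "v \<in> vals (transform F a b c d)"
    then obtain x y where xy: "(x,y) \<noteq> (0,0)" and v: "v = evalf (transform F a b c d) (emb x) (emb y)"
      by (auto simp: vals_def)
    have "d * (a*x + b*y) - b * (c*x + d*y) = (a*d - b*c) * x" "a * (c*x + d*y) - c * (a*x + b*y) = (a*d-b*c)*y"
      by (simp_all add: algebra_simps)
    then have "d * (a*x + b*y) - b * (c*x + d*y) = x" "a * (c*x + d*y) - c * (a*x + b*y) = y"
      using det by simp_all
    then have "(a*x + b*y, c*x + d*y) \<noteq> (0,0)" using xy by auto
    moreover have "v = evalf F (emb (a*x + b*y)) (emb (c*x + d*y))"
      using v by (simp add: evalf_transform)
    ultimately show "v \<in> vals F" unfolding vals_def by blast
  qed
next
  show "vals F \<subseteq> vals (transform F a b c d)"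
  proof
    fix v assume "v \<in> vals F"
    then obtain x y where xy: "(x,y) \<noteq> (0,0)" and v: "v = evalf F (emb x) (emb y)"
      by (auto simp: vals_def)
    define x' where "x' = d*x - b*y"
    define y' where "y' = a*y - c*x"
    have "a*x' + b*y' = (a*d-b*c)*x" "c*x' + d*y' = (a*d-b*c)*y"
      unfolding x'_def y'_def by (simp_all add: algebra_simps)
    then have e1: "a*x' + b*y' = x" "c*x' + d*y' = y" using det by simp_all
    then have "(x', y') \<noteq> (0,0)" using xy by auto
    moreover have "v = evalf (transform F a b c d) (emb x') (emb y')"
      using v by (simp add: evalf_transform flip: emb_mult emb_add add: e1)
    ultimately show "v \<in> vals (transform F a b c d)" unfolding vals_def by blast
  qed
qed


lemma transform_step:
  "transform (a,b,c) 0 1 (-1) d = (c, - b - 2*c*emb d, a + b*emb d + c*(emb d)^2)"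
  by (simp add: transform_def power2_eq_square algebra_simps)

lemma two_nz: "(2::rat fls) \<noteq> 0" by simp

lemma root_facts:
  fixes a b c sq :: "rat fls"
  defines "f \<equiv> first_root sq (a,b,c)" and "s \<equiv> second_root sq (a,b,c)"
  assumes D: "sq^2 = b^2 - 4*a*c" and r: "reduced sq (a,b,c)"
  shows "a \<noteq> 0" "f \<noteq> 0" "s \<noteq> 0" "deg f < 0" "0 < deg s"
    "evalf (a,b,c) x y = a * (x - f*y) * (x - s*y)" "c = a * f * s"
proof -
  show a: "a \<noteq> 0" using r by (simp add: reduced_def)
  show "f \<noteq> 0" "deg f < 0" "0 < deg s" using r by (simp_all add: reduced_def f_def s_def)
  then show "s \<noteq> 0" by auto
  have fs: "f = (sq - b)/(2*a)" "s = (-sq - b)/(2*a)" by (simp_all add: f_def s_def first_root_def second_root_def)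
  have "a * f * s = (sq - b) * (-sq - b) / (4*a)" using a by (simp add: fs field_simps)
  also have "(sq - b) * (-sq - b) = b^2 - sq^2" by (simp add: power2_eq_square algebra_simps)
  also have "\<dots> = 4*a*c" using D by simp
  finally show c: "c = a * f * s" using a by simp
  have "f + s = - b / a" using a by (simp add: fs field_simps)
  then have b: "b = - a * (f + s)" using a by (simp add: field_simps)
  show "evalf (a,b,c) x y = a * (x - f*y) * (x - s*y)"
    by (simp add: evalf_def b c power2_eq_square algebra_simps)
qed

lemma step_facts:
  fixes a b c a' b' c' sq :: "rat fls"
  assumes D: "sq^2 = b^2 - 4*a*c" and r1: "reduced sq (a,b,c)" and r2: "reduced sq (a',b',c')"
    and st: "transform (a,b,c) 0 1 (-1) d = (a',b',c')"
  shows "deg (inverse (first_root sq (a,b,c)) - emb d) < 0"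
    "deg (second_root sq (a',b',c') - emb d) < 0"
proof -
  have a': "a' = c" "b' = - b - 2*c*emb d" using st by (auto simp add: transform_step)
  have a: "a \<noteq> 0" and c: "c \<noteq> 0" using r1 r2 a' by (simp_all add: reduced_def)
  have fnz: "first_root sq (a,b,c) \<noteq> 0" using r1 by (simp add: reduced_def)
  then have sb: "sq - b \<noteq> 0" by (simp add: first_root_def)
  have snz: "second_root sq (a,b,c) \<noteq> 0" using r1 by (auto simp add: reduced_def)
  have sb2: "sq + b \<noteq> 0"
  proof
    assume "sq + b = 0"
    moreover have "-sq - b = -(sq + b)" by simp
    ultimately have "-sq - b = 0" by simp
    then show False using snz by (simp add: second_root_def)
  qed
  have key: "4*a*c = (b - sq) * (b + sq)" using D by (simp add: power2_eq_square algebra_simps)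
  have e1: "2*a/(sq-b) = -(sq+b)/(2*c)"
    using a c sb by (simp add: frac_eq_eq) (use D in algebra)
  have e2: "(sq + b + 2*c*emb d)/(2*c) = (sq+b)/(2*c) + emb d"
    using c by (simp add: add_divide_distrib)
  have "inverse (first_root sq (a,b,c)) - emb d = - first_root sq (a',b',c')"
  proof -
    have "first_root sq (a',b',c') = (sq + b + 2*c*emb d)/(2*c)"
      by (simp add: first_root_def a' diff_minus_eq_add)
    also have "\<dots> = (sq+b)/(2*c) + emb d" by (rule e2)
    finally have 1: "first_root sq (a',b',c') = (sq+b)/(2*c) + emb d" .
    have 2: "inverse (first_root sq (a,b,c)) = 2*a/(sq-b)"
      by (simp add: first_root_def)
    show ?thesis unfolding 1 2 e1 by (simp add: minus_divide_left)
  qed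
  moreover have "deg (first_root sq (a',b',c')) < 0" using r2 by (simp add: reduced_def)
  ultimately show "deg (inverse (first_root sq (a,b,c)) - emb d) < 0" by simp
  have e3: "2*a/(sq+b) = (b-sq)/(2*c)"
    using a c sb2 by (simp add: frac_eq_eq) (use D in algebra)
  have e4: "(- sq + b + 2*c*emb d)/(2*c) = (b - sq)/(2*c) + emb d"
    using c by (simp add: add_divide_distrib)
  have "second_root sq (a',b',c') - emb d = - inverse (second_root sq (a,b,c))"
  proof -
    have "second_root sq (a',b',c') = (- sq + b + 2*c*emb d)/(2*c)"
      by (simp add: second_root_def a' diff_minus_eq_add)
    also have "\<dots> = (b - sq)/(2*c) + emb d" by (rule e4)
    finally have 1: "second_root sq (a',b',c') = (b - sq)/(2*c) + emb d" .
    have 2: "inverse (second_root sq (a,b,c)) = 2*a/(- sq - b)"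
      by (simp add: second_root_def)
    have 3: "2*a/(- sq - b) = - (2*a/(sq+b))"
      by (metis minus_add_distrib minus_divide_right diff_conv_add_uminus add.commute)
    show ?thesis unfolding 1 2 3 e3 by simp
  qed
  moreover have "0 < deg (second_root sq (a,b,c))" using r1 by (simp add: reduced_def)
  ultimately show "deg (second_root sq (a',b',c') - emb d) < 0" using snz
    by (simp add: deg_inverse) (metis ereal_uminus_zero ereal_uminus_less_reorder)
qed


lemma ereal_add_neg_less: "e < 0 \<Longrightarrow> t \<noteq> -\<infinity> \<Longrightarrow> t \<noteq> \<infinity> \<Longrightarrow> e + (t::ereal) < t"
  by (cases e; cases t) auto

lemma ereal_add_pos_greater: "0 < e \<Longrightarrow> t \<noteq> -\<infinity> \<Longrightarrow> t \<noteq> \<infinity> \<Longrightarrow> t < e + (t::ereal)"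
  by (cases e; cases t) auto

lemma deg_finite: "f \<noteq> 0 \<Longrightarrow> deg f \<noteq> -\<infinity>" by simp

lemma deg_diff_commute: "deg (f - g) = deg (g - f)"
  by (metis deg_uminus minus_diff_eq)

lemma deg_emb_less: "deg (emb q) < deg (emb p) \<Longrightarrow> p \<noteq> 0 \<and> (q = 0 \<or> degree q < degree p)"
  by (auto simp: deg_emb split: if_splits)

lemma deg_emb_le: "deg (emb q) \<le> deg (emb p) \<Longrightarrow> p \<noteq> 0 \<Longrightarrow> degree q \<le> degree p"
  by (auto simp: deg_emb split: if_splits)



lemma descent:
  fixes a b c :: "int \<Rightarrow> rat fls" and \<delta> :: "int \<Rightarrow> rat poly" and sq v :: "rat fls"
  assumes D: "\<And>j. sq^2 = (b j)^2 - 4 * a j * c j"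
    and red: "\<And>j. reduced sq (a j, b j, c j)"
    and st: "\<And>j. transform (a j, b j, c j) 0 1 (-1) (\<delta> j) = (a (j+1), b (j+1), c (j+1))"
    and v: "v \<in> vals (a 0, b 0, c 0)"
  shows "\<exists>j. deg (a j) \<le> deg v"
proof -
  define f where "f j = first_root sq (a j, b j, c j)" for j
  define s where "s j = second_root sq (a j, b j, c j)" for j
  note rf = root_facts[OF D red, folded f_def s_def]
  have cj: "c j = a (j+1)" for j using st[of j] by (auto simp: transform_step)
  have L4: "deg (inverse (f j) - emb (\<delta> j)) < 0" for j
    unfolding f_def by (rule step_facts(1)[OF D red red st])
  have L5: "deg (s j - emb (\<delta> (j-1))) < 0" for j
    using step_facts(2)[OF D red red st, of "j-1"] by (simp add: s_def)
  have N1: "evalf (a (j+1), b (j+1), c (j+1)) (emb (\<delta> j * x - y)) (emb x) = evalf (a j, b j, c j) (emb x) (emb y)" for j x y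
    unfolding st[symmetric] evalf_transform by (simp add: algebra_simps)
  have N2: "evalf (a (j-1), b (j-1), c (j-1)) (emb y) (emb (\<delta> (j-1) * y - x)) = evalf (a j, b j, c j) (emb x) (emb y)" for j x y
    using N1[of "j-1" y "\<delta> (j-1) * y - x"] by simp
  define P where "P n \<longleftrightarrow> (\<exists>j x y. (x,y) \<noteq> (0,0) \<and> evalf (a j, b j, c j) (emb x) (emb y) = v \<and> max (degree x) (degree y) = n)" for n
  have "\<exists>n. P n" using v unfolding P_def vals_def by blast
  then obtain n where Pn: "P n" and minP: "\<And>m. m < n \<Longrightarrow> \<not> P m"
    by (metis exists_least_iff)
  then obtain j x y where xy: "(x,y) \<noteq> (0,0)" and vj: "v = evalf (a j, b j, c j) (emb x) (emb y)"
     and n: "n = max (degree x) (degree y)" unfolding P_def by blast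
  define X where "X = emb x"
  define Y where "Y = emb y"
  have vform: "v = a j * (X - f j * Y) * (X - s j * Y)" unfolding vj rf(6) X_def Y_def ..
  have dv: "deg v = deg (a j) + deg (X - f j * Y) + deg (X - s j * Y)" by (simp add: vform)
  show ?thesis
  proof (cases "deg Y \<le> deg X")
    case True
    have xnz: "x \<noteq> 0"
    proof
      assume x0: "x = 0"
      then have "deg Y \<le> -\<infinity>" using True by (simp add: X_def)
      then have "y = 0" by (simp add: Y_def deg_emb split: if_splits)
      with x0 xy show False by simp
    qed
    have dX: "0 \<le> deg X" "deg X \<noteq> -\<infinity>" using xnz by (simp_all add: X_def deg_emb)
    have "deg (f j * Y) < deg X"
    proof (cases "y = 0")
      case True then show ?thesis using dX by (simp add: Y_def)
    next
      case False
      then have "deg (f j * Y) < deg Y" using rf(4) by (simp add: Y_def ereal_add_neg_less)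
      then show ?thesis using True by simp
    qed
    then have dL: "deg (X - f j * Y) = deg X" by (rule deg_diff_eq1)
    show ?thesis
    proof (cases "0 \<le> deg (X - s j * Y)")
      case True
      have "0 \<le> deg X + deg (X - s j * Y)" by (rule add_nonneg_nonneg[OF dX(1) True])
      then have "deg (a j) \<le> deg (a j) + (deg X + deg (X - s j * Y))" by (rule add_increasing2) simp
      then show ?thesis by (intro exI[of _ j]) (simp add: dv dL add.assoc)
    next
      case False
      then have neg: "deg (X - s j * Y) < 0" by simp
      have ynz: "y \<noteq> 0"
      proof
        assume "y = 0"
        then have "X - s j * Y = X" by (simp add: Y_def)
        with neg dX show False by simp
      qed
      have dY: "0 \<le> deg Y" "deg Y \<noteq> -\<infinity>" using ynz by (simp_all add: Y_def deg_emb)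
      have dsY: "deg Y < deg (s j * Y)" using rf(5) dY by (simp add: ereal_add_pos_greater)
      have "deg (s j * Y + (X - s j * Y)) = deg (s j * Y)"
        by (rule deg_add_eq1) (meson neg dsY dY(1) le_less_trans less_trans)
      then have dXs: "deg X = deg (s j * Y)" by simp
      define w where "w = \<delta> (j-1) * y - x"
      have ew: "emb w = (emb (\<delta> (j-1)) - s j) * Y + (s j * Y - X)"
        by (simp add: w_def X_def Y_def algebra_simps)
      have d1: "deg ((emb (\<delta> (j-1)) - s j) * Y) < deg Y"
        using L5[of j] dY by (simp add: deg_diff_commute[of "emb _"] ereal_add_neg_less)
      have d2: "deg (s j * Y - X) < deg Y"
        using neg dY by (simp add: deg_diff_commute[of "s j * Y"])
      have "deg (emb w) \<le> max (deg ((emb (\<delta> (j-1)) - s j) * Y)) (deg (s j * Y - X))"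
        unfolding ew by (rule deg_add_le)
      also have "\<dots> < deg Y" by (simp only: max_less_iff_conj) (use d1 d2 in blast)
      finally have "deg (emb w) < deg Y" .
      then have w: "w = 0 \<or> degree w < degree y" using deg_emb_less[of w y] by (auto simp: Y_def)
      have "deg Y < deg X" using dsY dXs by simp
      then have yx: "degree y < degree x" using deg_emb_less[of y x] ynz by (auto simp: X_def Y_def)
      have "P (max (degree y) (degree w))"
        unfolding P_def
        by (rule exI[of _ "j-1"], rule exI[of _ y], rule exI[of _ w]) (use ynz N2[where j=j and x=x and y=y] vj w_def in auto)
      moreover have "max (degree y) (degree w) < n" using w yx n by auto
      ultimately show ?thesis using minP by blast
    qed
  next
    case False
    then have lt: "deg X < deg Y" by simp
    have ynz: "y \<noteq> 0" using lt by (auto simp: Y_def)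
    have dY: "0 \<le> deg Y" "deg Y \<noteq> -\<infinity>" using ynz by (simp_all add: Y_def deg_emb)
    have dsY: "deg Y < deg (s j * Y)" using rf(5) dY by (simp add: ereal_add_pos_greater)
    have dM: "deg (X - s j * Y) = deg (s j) + deg Y"
      using deg_diff_eq2[of X "s j * Y"] lt dsY by simp
    define W where "W = Y - inverse (f j) * X"
    have eL: "X - f j * Y = - f j * W" using rf(2) by (simp add: W_def algebra_simps)
    have dv2: "deg v = deg (a j) + (deg (f j) + deg W) + (deg (s j) + deg Y)"
      using dv dM eL by simp
    show ?thesis
    proof (cases "0 \<le> deg W")
      case True
      have "deg (a (j+1)) = deg (a j) + deg (f j) + deg (s j)"
        using rf(7)[of j] cj[of j] by simp
      also have "\<dots> \<le> deg (a j) + (deg (f j) + deg W) + (deg (s j) + deg Y)"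
      proof -
        have 1: "deg (f j) \<le> deg (f j) + deg W" by (rule add_increasing2[OF True order_refl])
        have 2: "deg (s j) \<le> deg (s j) + deg Y" by (rule add_increasing2[OF dY(1) order_refl])
        show ?thesis by (intro add_mono order_refl 1 2)
      qed
      finally show ?thesis using dv2 by metis
    next
      case False
      then have negW: "deg W < 0" by simp
      have xnz: "x \<noteq> 0" using negW dY by (auto simp: W_def X_def)
      have dX: "0 \<le> deg X" "deg X \<noteq> -\<infinity>" using xnz by (simp_all add: X_def deg_emb)
      define w where "w = \<delta> j * x - y"
      have ew: "emb w = (emb (\<delta> j) - inverse (f j)) * X - W"
        using rf(2) by (simp add: w_def X_def Y_def W_def algebra_simps)
      have d1: "deg ((emb (\<delta> j) - inverse (f j)) * X) < deg X"
        using L4[of j] dX by (simp add: deg_diff_commute[of "emb _"] ereal_add_neg_less)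
      have d2: "deg W < deg X" using negW dX by simp
      have "deg (emb w) \<le> max (deg ((emb (\<delta> j) - inverse (f j)) * X)) (deg W)"
        unfolding ew by (rule deg_diff_le)
      also have "\<dots> < deg X" by (simp only: max_less_iff_conj) (use d1 d2 in blast)
      finally have "deg (emb w) < deg X" .
      then have w: "w = 0 \<or> degree w < degree x" using deg_emb_less[of w x] by (auto simp: X_def)
      have xy': "degree x < degree y" using deg_emb_less[of x y] lt ynz xnz by (auto simp: X_def Y_def)
      have "P (max (degree w) (degree x))"
        unfolding P_def
        by (rule exI[of _ "j+1"], rule exI[of _ w], rule exI[of _ x]) (use xnz N1[where j=j and x=x and y=y] vj w_def in auto)
      moreover have "max (degree w) (degree x) < n" using w xy' n by auto
      ultimately show ?thesis using minP by blast
    qed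
  qed
qed


theorem theorem8:
  fixes A B :: "int \<Rightarrow> rat fls" and \<delta> :: "int \<Rightarrow> rat poly"
    and D sq :: "rat fls" and Q :: form
  assumes sq: "sq ^ 2 = D" and Dnz: "D \<noteq> 0"
    and forms: "\<And>i. is_bqf ((-1)^nat \<bar>i\<bar> * A i, B i, (-1)^nat \<bar>i+1\<bar> * A (i+1))"
    and disc: "\<And>i. disc ((-1)^nat \<bar>i\<bar> * A i, B i, (-1)^nat \<bar>i+1\<bar> * A (i+1)) = D"
    and red: "\<And>i. reduced sq ((-1)^nat \<bar>i\<bar> * A i, B i, (-1)^nat \<bar>i+1\<bar> * A (i+1))"
    and step: "\<And>i. transform ((-1)^nat \<bar>i\<bar> * A i, B i, (-1)^nat \<bar>i+1\<bar> * A (i+1)) 0 1 (-1) (\<delta> i)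
                  = ((-1)^nat \<bar>i+1\<bar> * A (i+1), B (i+1), (-1)^nat \<bar>i+2\<bar> * A (i+2))"
    and Qf: "is_bqf Q"
    and Qeq: "properly_equiv ((-1)^nat \<bar>0\<bar> * A 0, B 0, (-1)^nat \<bar>0+1\<bar> * A (0+1)) Q"
  shows "m_min Q = (INF i. deg (A i))"
proof -
  define a where "a j = (-1)^nat \<bar>j\<bar> * A j" for j
  define c where "c j = (-1)^nat \<bar>j+1\<bar> * A (j+1)" for j
  have Dj: "sq^2 = (B j)^2 - 4 * a j * c j" for j
    using disc[of j] sq by (simp add: disc_def a_def c_def)
  have redj: "reduced sq (a j, B j, c j)" for j
    using red[of j] by (simp add: a_def c_def)
  have stj: "transform (a j, B j, c j) 0 1 (-1) (\<delta> j) = (a (j+1), B (j+1), c (j+1))" for j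
  proof -
    have e: "j + 1 + 1 = j + 2" by simp
    show ?thesis using step[of j] unfolding a_def c_def e by simp
  qed
  have det: "0 * \<delta> j - 1 * (-1) = (1::rat poly)" for j by simp
  have vstep: "vals (a (j+1), B (j+1), c (j+1)) = vals (a j, B j, c j)" for j
    using vals_transform[OF det[of j], of "(a j, B j, c j)"] stj[of j] by simp
  have vall: "vals (a j, B j, c j) = vals (a 0, B 0, c 0)" for j
  proof (induction j rule: int_induct[where k=0])
    case base then show ?case by simp
  next
    case (step1 i) then show ?case using vstep[of i] by simp
  next
    case (step2 i) then show ?case using vstep[of "i-1"] by simp
  qed
  obtain p q r t where pqrt: "p*t - q*r = 1" and Qt: "transform (a 0, B 0, c 0) p q r t = Q"
    using Qeq unfolding properly_equiv_def a_def c_def by auto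
  have vQ: "vals Q = vals (a 0, B 0, c 0)"
    using vals_transform[OF pqrt, of "(a 0, B 0, c 0)"] Qt by simp
  have degA: "deg (a j) = deg (A j)" for j unfolding a_def by (rule deg_neg1_pow)
  have mem: "a j \<in> vals (a 0, B 0, c 0)" for j
  proof -
    have "evalf (a j, B j, c j) (emb 1) (emb 0) = a j" by (simp add: evalf_def)
    then have "a j \<in> vals (a j, B j, c j)" unfolding vals_def
      by (metis (mono_tags, lifting) mem_Collect_eq one_neq_zero prod.inject)
    then show ?thesis using vall[of j] by simp
  qed
  have "m_min Q = Inf (deg ` vals (a 0, B 0, c 0))" by (simp add: m_min_vals vQ)
  also have "\<dots> = (INF i. deg (A i))"
  proof (rule antisym)
    show "Inf (deg ` vals (a 0, B 0, c 0)) \<le> (INF i. deg (A i))"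
    proof (rule INF_greatest)
      fix i
      show "Inf (deg ` vals (a 0, B 0, c 0)) \<le> deg (A i)"
        using mem[of i] degA[of i] by (metis Inf_lower image_eqI)
    qed
    show "(INF i. deg (A i)) \<le> Inf (deg ` vals (a 0, B 0, c 0))"
    proof (rule Inf_greatest)
      fix u assume "u \<in> deg ` vals (a 0, B 0, c 0)"
      then obtain v where v: "v \<in> vals (a 0, B 0, c 0)" and u: "u = deg v" by auto
      obtain j where "deg (a j) \<le> deg v"
        using descent[OF Dj redj stj v] by blast
      moreover have "(INF i. deg (A i)) \<le> deg (A j)" by (rule INF_lower) simp
      ultimately show "(INF i. deg (A i)) \<le> u" using u degA[of j] by simp
    qed
  qed
  finally show ?thesis .
qed

end
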